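(* There exists an absolute constant $\varepsilon_0>0$ such that for the gossip USD, every $n$ and every $t\ge1$: if $\beta_{t-1}\ge\frac12-\varepsilon_0$, $\psi_{t-1}\le\varepsilon_0$ and $\gamma_{t-1}\le\varepsilon_0$, then $$\mathbb E_{t-1}[\widetilde\gamma_t]\ge\widetilde\gamma_{t-1}+\frac{1}{12n}.$$
   Context: Vertex set $V$, $|V|=n$; opinions in $\Sigma=[k]\cup\{\bot\}$ ($\bot$ = undecided). USD update rule: $\mathsf{update}(\sigma_1,\sigma_2)=\bot$ if $\sigma_1,\sigma_2\in[k]$ and $\sigma_1\ne\sigma_2$; $=\sigma_2$ if $\sigma_1=\bot$; $=\sigma_1$ otherwise. Gossip USD: given $\mathrm{opn}_t\in\Sigma^V$, every $u\in V$ independently picks $v$ uniformly from $V$ and sets $\mathrm{opn}_{t+1}(u)=\mathsf{update}(\mathrm{opn}_t(u),\mathrm{opn}_t(v))$. Notation: $\alpha_t(i)=|\{u:\mathrm{opn}_t(u)=i\}|/n$, $\beta_t=\sum_{i\in[k]}\alpha_t(i)$, $\gamma_t=\sum_{i\in[k]}\alpha_t(i)^2$, $\psi_t=\beta_t(2\beta_t-1)-\gamma_t$, and $\widetilde\gamma_t=\gamma_t/\beta_t^2$ if $\beta_t>0$, $\widetilde\gamma_t=0$ if $\beta_t=0$. $\mathbb E_{t-1}$ is conditional expectation given the natural filtration $\mathcal F_{t-1}$. *)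

theory Defs
  imports "HOL-Probability.Probability"
begin

text \<open>Opinions: None is the undecided opinion, Some i with 1 \<le> i \<le> k a decided opinion.
  Vertices are natural numbers in a finite vertex set V.\<close>

fun usd_update :: "nat option \<Rightarrow> nat option \<Rightarrow> nat option" where
  "usd_update (Some a) (Some b) = (if a \<noteq> b then None else Some a)"
| "usd_update None s = s"
| "usd_update (Some a) None = Some a"

definition valid_config :: "nat \<Rightarrow> nat set \<Rightarrow> (nat \<Rightarrow> nat option) \<Rightarrow> bool" where
  "valid_config k V opn \<longleftrightarrow> (\<forall>u\<in>V. opn u = None \<or> (\<exists>i\<in>{1..k}. opn u = Some i))"

definition gossip_step :: "nat set \<Rightarrow> (nat \<Rightarrow> nat option) \<Rightarrow> (nat \<Rightarrow> nat option) pmf" where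
  "gossip_step V opn =
     map_pmf (\<lambda>c u. if u \<in> V then usd_update (opn u) (opn (c u)) else opn u)
       (Pi_pmf V 0 (\<lambda>_. pmf_of_set V))"

definition alpha :: "nat set \<Rightarrow> (nat \<Rightarrow> nat option) \<Rightarrow> nat \<Rightarrow> real" where
  "alpha V opn i = real (card {u\<in>V. opn u = Some i}) / real (card V)"

definition beta :: "nat \<Rightarrow> nat set \<Rightarrow> (nat \<Rightarrow> nat option) \<Rightarrow> real" where
  "beta k V opn = (\<Sum>i\<in>{1..k}. alpha V opn i)"

definition gamma :: "nat \<Rightarrow> nat set \<Rightarrow> (nat \<Rightarrow> nat option) \<Rightarrow> real" where
  "gamma k V opn = (\<Sum>i\<in>{1..k}. (alpha V opn i)^2)"

definition psi :: "nat \<Rightarrow> nat set \<Rightarrow> (nat \<Rightarrow> nat option) \<Rightarrow> real" where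
  "psi k V opn = beta k V opn * (2 * beta k V opn - 1) - gamma k V opn"

definition gamma_tilde :: "nat \<Rightarrow> nat set \<Rightarrow> (nat \<Rightarrow> nat option) \<Rightarrow> real" where
  "gamma_tilde k V opn = (if beta k V opn > 0 then gamma k V opn / (beta k V opn)^2 else 0)"

end

theory Submission
  imports Defs
begin



abbreviation EE :: "'a pmf \<Rightarrow> ('a \<Rightarrow> real) \<Rightarrow> real" where
  "EE M f \<equiv> measure_pmf.expectation M f"

lemma fin_Pi:
  assumes "finite W" "finite (set_pmf p)"
  shows "finite (set_pmf (Pi_pmf W d (\<lambda>_. p)))"
  using assms(1)
proof (induction W rule: finite_induct)
  case empty then show ?case by simp
next
  case (insert x A)
  then show ?case using assms(2) by (simp add: Pi_pmf_insert)
qed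

lemma EE_pmf_sum:
  assumes "finite (set_pmf p)"
  shows "EE p g = (\<Sum>a\<in>set_pmf p. g a * pmf p a)"
  by (rule integral_measure_pmf_real) (use assms in auto)

lemma pair_prod:
  assumes "finite (set_pmf p)" "finite (set_pmf q)"
  shows "EE (pair_pmf p q) (\<lambda>z. g (fst z) * h (snd z)) = EE p g * EE q h"
proof -
  have "EE (pair_pmf p q) (\<lambda>z. g (fst z) * h (snd z)) =
     (\<Sum>z\<in>set_pmf p \<times> set_pmf q. g (fst z) * h (snd z) * pmf (pair_pmf p q) z)"
    by (rule integral_measure_pmf_real) (use assms in auto)
  also have "\<dots> = (\<Sum>y\<in>set_pmf p. \<Sum>f\<in>set_pmf q. (g y * pmf p y) * (h f * pmf q f))"
    by (subst sum.cartesian_product) (auto simp: pmf_pair intro!: sum.cong simp: algebra_simps)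
  also have "\<dots> = EE p g * EE q h"
    by (simp add: EE_pmf_sum[OF assms(1)] EE_pmf_sum[OF assms(2)] sum_product)
  finally show ?thesis .
qed

lemma pair_add:
  assumes "finite (set_pmf p)" "finite (set_pmf q)"
  shows "EE (pair_pmf p q) (\<lambda>z. F z + G z) = EE (pair_pmf p q) F + EE (pair_pmf p q) G"
  by (rule Bochner_Integration.integral_add; rule integrable_measure_pmf_finite; use assms in simp)

lemma step_eq:
  assumes "finite A" "x \<notin> A"
  shows "EE (Pi_pmf (insert x A) d P) F = EE (pair_pmf (P x) (Pi_pmf A d P)) (\<lambda>z. F ((snd z)(x := fst z)))"
  using assms by (simp add: Pi_pmf_insert case_prod_beta)

lemma sum_upd:
  assumes "x \<notin> A"
  shows "(\<Sum>v\<in>A. a v ((f(x:=y)) v)) = (\<Sum>v\<in>A. a v (f v))"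
  using assms by (intro sum.cong) auto

lemma sum_upd_ins:
  assumes "finite A" "x \<notin> A"
  shows "(\<Sum>v\<in>insert x A. a v ((f(x:=y)) v)) = a x y + (\<Sum>v\<in>A. a v (f v))"
proof -
  have "(\<Sum>v\<in>insert x A. a v ((f(x:=y)) v)) = a x ((f(x:=y)) x) + (\<Sum>v\<in>A. a v ((f(x:=y)) v))"
    by (rule sum.insert[OF assms])
  also have "\<dots> = a x y + (\<Sum>v\<in>A. a v (f v))"
    by (simp only: sum_upd[OF assms(2)] fun_upd_same)
  finally show ?thesis .
qed

lemma mom1:
  assumes "finite W" "finite (set_pmf p)"
  shows "EE (Pi_pmf W d (\<lambda>_. p)) (\<lambda>f. \<Sum>v\<in>W. a v (f v)) = (\<Sum>v\<in>W. EE p (a v))"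
  using assms(1)
proof (induction W rule: finite_induct)
  case empty then show ?case by simp
next
  case (insert x A)
  let ?M = "Pi_pmf A d (\<lambda>_. p)"
  have fM: "finite (set_pmf ?M)" by (rule fin_Pi[OF insert(1) assms(2)])
  have "EE (Pi_pmf (insert x A) d (\<lambda>_. p)) (\<lambda>f. \<Sum>v\<in>insert x A. a v (f v))
     = EE (pair_pmf p ?M) (\<lambda>z. a x (fst z) + (\<Sum>v\<in>A. a v (snd z v)))"
    by (simp only: step_eq[OF insert(1,2)] sum_upd_ins[OF insert(1,2)])
  also have "\<dots> = EE p (a x) + EE ?M (\<lambda>f. \<Sum>v\<in>A. a v (f v))"
    by (simp only: pair_add[OF assms(2) fM] expectation_pair_pmf_fst[of p ?M "a x"]
         expectation_pair_pmf_snd[of p ?M "\<lambda>f. \<Sum>v\<in>A. a v (f v)"])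
  finally show ?case using insert by simp
qed

lemma EE_mono:
  assumes "finite (set_pmf p)" "\<And>y. f y \<le> g y"
  shows "EE p f \<le> EE p g"
  by (rule integral_mono) (auto intro: integrable_measure_pmf_finite assms)

lemma EE_nonneg:
  assumes "\<And>y. 0 \<le> f y"
  shows "0 \<le> EE p f"
  by (rule Bochner_Integration.integral_nonneg) (use assms in auto)

lemma mom2:
  assumes "finite W" "finite (set_pmf p)"
  shows "EE (Pi_pmf W d (\<lambda>_. p)) (\<lambda>f. (\<Sum>v\<in>W. a v (f v))^2) =
     (EE (Pi_pmf W d (\<lambda>_. p)) (\<lambda>f. \<Sum>v\<in>W. a v (f v)))^2 + (\<Sum>v\<in>W. EE p (\<lambda>y. (a v y)^2) - (EE p (a v))^2)"
  using assms(1)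
proof (induction W rule: finite_induct)
  case empty then show ?case by simp
next
  case (insert x A)
  let ?M = "Pi_pmf A d (\<lambda>_. p)"
  let ?S = "\<lambda>f. \<Sum>v\<in>A. a v (f v)"
  have fM: "finite (set_pmf ?M)" by (rule fin_Pi[OF insert(1) assms(2)])
  have "EE (Pi_pmf (insert x A) d (\<lambda>_. p)) (\<lambda>f. (\<Sum>v\<in>insert x A. a v (f v))^2)
     = EE (pair_pmf p ?M) (\<lambda>z. (a x (fst z) + ?S (snd z))^2)"
    by (simp only: step_eq[OF insert(1,2)] sum_upd_ins[OF insert(1,2)])
  also have "(\<lambda>z. (a x (fst z) + ?S (snd z))^2) = (\<lambda>z. ((a x (fst z))^2 + (2 * a x (fst z)) * ?S (snd z)) + (?S (snd z))^2)"
    by (auto simp: power2_eq_square algebra_simps)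
  also have "EE (pair_pmf p ?M) \<dots> = EE p (\<lambda>y. (a x y)^2) + 2 * EE p (a x) * EE ?M ?S + EE ?M (\<lambda>f. (?S f)^2)"
    by (simp only: pair_add[OF assms(2) fM] pair_prod[OF assms(2) fM, of "\<lambda>y. 2 * a x y" ?S]
        expectation_pair_pmf_fst[of p ?M "\<lambda>y. (a x y)^2"]
        expectation_pair_pmf_snd[of p ?M "\<lambda>f. (?S f)^2"] integral_mult_right_zero)
  finally show ?case using insert mom1[OF insert(1) assms(2), of d a] mom1[OF _ assms(2), of "insert x A" d a]
    by (simp add: power2_eq_square algebra_simps)
qed

lemma st_arith:
  fixes a1 ab b1 z1 t1 zt :: real
  assumes "ab \<le> a1" "zt \<le> z1 * t1 + z1" "0 \<le> a1 * b1"
  shows "ab + a1 * t1 + b1 * z1 + zt \<le> (a1 + z1) * (b1 + t1) + (a1 + z1)"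
proof -
  have r: "(a1 + z1) * (b1 + t1) + (a1 + z1) = a1 * b1 + a1 * t1 + z1 * b1 + z1 * t1 + a1 + z1"
    by (simp add: algebra_simps)
  have l: "ab + a1 * t1 + b1 * z1 + zt = ab + a1 * t1 + z1 * b1 + zt" by simp
  show ?thesis unfolding r l using assms by linarith
qed

lemma momST:
  assumes "finite W" "finite (set_pmf p)"
    and a01: "\<And>v y. 0 \<le> a v y \<and> a v y \<le> 1" and b01: "\<And>v y. 0 \<le> b v y \<and> b v y \<le> 1"
  shows "EE (Pi_pmf W d (\<lambda>_. p)) (\<lambda>f. (\<Sum>v\<in>W. a v (f v)) * (\<Sum>v\<in>W. b v (f v))) \<le>
     EE (Pi_pmf W d (\<lambda>_. p)) (\<lambda>f. \<Sum>v\<in>W. a v (f v)) * EE (Pi_pmf W d (\<lambda>_. p)) (\<lambda>f. \<Sum>v\<in>W. b v (f v))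
     + EE (Pi_pmf W d (\<lambda>_. p)) (\<lambda>f. \<Sum>v\<in>W. a v (f v))"
  using assms(1)
proof (induction W rule: finite_induct)
  case empty then show ?case by simp
next
  case (insert x A)
  let ?M = "Pi_pmf A d (\<lambda>_. p)"
  let ?S = "\<lambda>f. \<Sum>v\<in>A. a v (f v)"
  let ?T = "\<lambda>f. \<Sum>v\<in>A. b v (f v)"
  have fM: "finite (set_pmf ?M)" by (rule fin_Pi[OF insert(1) assms(2)])
  have "EE (Pi_pmf (insert x A) d (\<lambda>_. p)) (\<lambda>f. (\<Sum>v\<in>insert x A. a v (f v)) * (\<Sum>v\<in>insert x A. b v (f v)))
     = EE (pair_pmf p ?M) (\<lambda>z. (a x (fst z) + ?S (snd z)) * (b x (fst z) + ?T (snd z)))"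
    by (simp only: step_eq[OF insert(1,2)] sum_upd_ins[OF insert(1,2)])
  also have "(\<lambda>z. (a x (fst z) + ?S (snd z)) * (b x (fst z) + ?T (snd z))) = (\<lambda>z. ((a x (fst z) * b x (fst z) + a x (fst z) * ?T (snd z)) + b x (fst z) * ?S (snd z)) + ?S (snd z) * ?T (snd z))"
    by (auto simp: algebra_simps)
  also have "EE (pair_pmf p ?M) \<dots> = EE p (\<lambda>y. a x y * b x y) + EE p (a x) * EE ?M ?T + EE p (b x) * EE ?M ?S + EE ?M (\<lambda>f. ?S f * ?T f)"
    by (simp only: pair_add[OF assms(2) fM] pair_prod[OF assms(2) fM, of "a x" ?T]
        pair_prod[OF assms(2) fM, of "b x" ?S]
        expectation_pair_pmf_fst[of p ?M "\<lambda>y. a x y * b x y"]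
        expectation_pair_pmf_snd[of p ?M "\<lambda>f. ?S f * ?T f"])
  finally have eq: "EE (Pi_pmf (insert x A) d (\<lambda>_. p)) (\<lambda>f. (\<Sum>v\<in>insert x A. a v (f v)) * (\<Sum>v\<in>insert x A. b v (f v)))
     = EE p (\<lambda>y. a x y * b x y) + EE p (a x) * EE ?M ?T + EE p (b x) * EE ?M ?S + EE ?M (\<lambda>f. ?S f * ?T f)" .
  have ab: "EE p (\<lambda>y. a x y * b x y) \<le> EE p (a x)"
    by (rule EE_mono[OF assms(2)]) (metis a01 b01 mult_left_le mult.commute)
  have nn: "0 \<le> EE p (a x)" "0 \<le> EE p (b x)" "0 \<le> EE ?M ?S" "0 \<le> EE ?M ?T"
    by (auto intro!: EE_nonneg sum_nonneg simp: a01 b01)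
  have "0 \<le> EE p (a x) * EE p (b x)" using nn by simp
  then have ab0: "0 \<le> EE p (a x) * EE p (b x)" .
  have ES: "EE (Pi_pmf (insert x A) d (\<lambda>_. p)) (\<lambda>f. \<Sum>v\<in>insert x A. a v (f v)) = EE p (a x) + EE ?M ?S"
    using mom1[OF insert(1) assms(2), of d a] mom1[OF _ assms(2), of "insert x A" d a] insert(1,2) by simp
  have ET: "EE (Pi_pmf (insert x A) d (\<lambda>_. p)) (\<lambda>f. \<Sum>v\<in>insert x A. b v (f v)) = EE p (b x) + EE ?M ?T"
    using mom1[OF insert(1) assms(2), of d b] mom1[OF _ assms(2), of "insert x A" d b] insert(1,2) by simp
  show ?case unfolding eq ES ET
    by (rule st_arith[OF ab insert.IH ab0])
qed

lemma s2t_arith: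
  fixes a1 a2 ab a2b b1 z1 z2 t1 zt zzt :: real
  assumes h1: "a2b \<le> a1" and IH: "zzt \<le> z2 * t1 + z1 + 2 * z1^2"
    and p1: "ab * z1 \<le> a1 * z1" and p2: "a1 * zt \<le> a1 * (z1 * t1 + z1)"
    and n1: "0 \<le> a2 * b1" and n2: "0 \<le> a1 * z1 * b1" and n3: "0 \<le> a1"
  shows "a2b + a2 * t1 + 2 * ab * z1 + 2 * a1 * zt + b1 * z2 + zzt
     \<le> (a2 + 2 * a1 * z1 + z2) * (b1 + t1) + (a1 + z1) + 2 * (a1 + z1)^2"
proof -
  have r: "(a2 + 2 * a1 * z1 + z2) * (b1 + t1) + (a1 + z1) + 2 * (a1 + z1)^2
    = a2*b1 + a2*t1 + 2*(a1*z1*b1) + 2*(a1*z1*t1) + z2*b1 + z2*t1 + a1 + z1 + 2*(a1*a1) + 4*(a1*z1) + 2*z1^2"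
    by (simp add: algebra_simps power2_eq_square)
  have p2': "a1 * zt \<le> a1 * z1 * t1 + a1 * z1" using p2 by (simp add: algebra_simps)
  have sq: "0 \<le> a1 * a1" by simp
  have l: "a2b + a2 * t1 + 2 * ab * z1 + 2 * a1 * zt + b1 * z2 + zzt = a2b + a2 * t1 + 2 * (ab * z1) + 2 * (a1 * zt) + z2 * b1 + zzt"
    by (simp add: algebra_simps)
  show ?thesis unfolding r l using h1 IH p1 p2' n1 n2 sq by linarith
qed

lemma momS2T:
  assumes "finite W" "finite (set_pmf p)"
    and a01: "\<And>v y. 0 \<le> a v y \<and> a v y \<le> 1" and b01: "\<And>v y. 0 \<le> b v y \<and> b v y \<le> 1"
  shows "EE (Pi_pmf W d (\<lambda>_. p)) (\<lambda>f. (\<Sum>v\<in>W. a v (f v))^2 * (\<Sum>v\<in>W. b v (f v))) \<le>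
     EE (Pi_pmf W d (\<lambda>_. p)) (\<lambda>f. (\<Sum>v\<in>W. a v (f v))^2) * EE (Pi_pmf W d (\<lambda>_. p)) (\<lambda>f. \<Sum>v\<in>W. b v (f v))
     + EE (Pi_pmf W d (\<lambda>_. p)) (\<lambda>f. \<Sum>v\<in>W. a v (f v))
     + 2 * (EE (Pi_pmf W d (\<lambda>_. p)) (\<lambda>f. \<Sum>v\<in>W. a v (f v)))^2"
  using assms(1)
proof (induction W rule: finite_induct)
  case empty then show ?case by simp
next
  case (insert x A)
  let ?M = "Pi_pmf A d (\<lambda>_. p)"
  let ?S = "\<lambda>f. \<Sum>v\<in>A. a v (f v)"
  let ?T = "\<lambda>f. \<Sum>v\<in>A. b v (f v)"
  have fM: "finite (set_pmf ?M)" by (rule fin_Pi[OF insert(1) assms(2)])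
  have "EE (Pi_pmf (insert x A) d (\<lambda>_. p)) (\<lambda>f. (\<Sum>v\<in>insert x A. a v (f v))^2 * (\<Sum>v\<in>insert x A. b v (f v)))
     = EE (pair_pmf p ?M) (\<lambda>z. (a x (fst z) + ?S (snd z))^2 * (b x (fst z) + ?T (snd z)))"
    by (simp only: step_eq[OF insert(1,2)] sum_upd_ins[OF insert(1,2)])
  also have "(\<lambda>z. (a x (fst z) + ?S (snd z))^2 * (b x (fst z) + ?T (snd z))) =
     (\<lambda>z. (a x (fst z))^2 * b x (fst z) + (a x (fst z))^2 * ?T (snd z)
        + (2 * a x (fst z) * b x (fst z)) * ?S (snd z) + (2 * a x (fst z)) * (?S (snd z) * ?T (snd z))
        + b x (fst z) * (?S (snd z))^2 + (?S (snd z))^2 * ?T (snd z))"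
    by (auto simp: algebra_simps power2_eq_square)
  also have "EE (pair_pmf p ?M) \<dots> = EE p (\<lambda>y. (a x y)^2 * b x y) + EE p (\<lambda>y. (a x y)^2) * EE ?M ?T
     + EE p (\<lambda>y. 2 * a x y * b x y) * EE ?M ?S + EE p (\<lambda>y. 2 * a x y) * EE ?M (\<lambda>f. ?S f * ?T f)
     + EE p (b x) * EE ?M (\<lambda>f. (?S f)^2) + EE ?M (\<lambda>f. (?S f)^2 * ?T f)"
    by (simp only: pair_add[OF assms(2) fM]
        pair_prod[OF assms(2) fM, of "\<lambda>y. (a x y)^2" ?T]
        pair_prod[OF assms(2) fM, of "\<lambda>y. 2 * a x y * b x y" ?S]
        pair_prod[OF assms(2) fM, of "\<lambda>y. 2 * a x y" "\<lambda>f. ?S f * ?T f"]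
        pair_prod[OF assms(2) fM, of "b x" "\<lambda>f. (?S f)^2"]
        expectation_pair_pmf_fst[of p ?M "\<lambda>y. (a x y)^2 * b x y"]
        expectation_pair_pmf_snd[of p ?M "\<lambda>f. (?S f)^2 * ?T f"])
  also have "EE p (\<lambda>y. 2 * a x y * b x y) = 2 * EE p (\<lambda>y. a x y * b x y)"
    by (simp add: mult.assoc)
  also have "EE p (\<lambda>y. 2 * a x y) = 2 * EE p (a x)"
    by simp
  finally have eq: "EE (Pi_pmf (insert x A) d (\<lambda>_. p)) (\<lambda>f. (\<Sum>v\<in>insert x A. a v (f v))^2 * (\<Sum>v\<in>insert x A. b v (f v)))
     = EE p (\<lambda>y. (a x y)^2 * b x y) + EE p (\<lambda>y. (a x y)^2) * EE ?M ?T
     + 2 * EE p (\<lambda>y. a x y * b x y) * EE ?M ?S + 2 * EE p (a x) * EE ?M (\<lambda>f. ?S f * ?T f)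
     + EE p (b x) * EE ?M (\<lambda>f. (?S f)^2) + EE ?M (\<lambda>f. (?S f)^2 * ?T f)" .
  have ab: "EE p (\<lambda>y. a x y * b x y) \<le> EE p (a x)"
    by (rule EE_mono[OF assms(2)]) (metis a01 b01 mult_left_le mult.commute)
  have a2b: "EE p (\<lambda>y. (a x y)^2 * b x y) \<le> EE p (a x)"
  proof (rule EE_mono[OF assms(2)])
    fix y
    have "(a x y)^2 \<le> a x y" using a01[of x y] by (simp add: power2_eq_square mult_left_le)
    moreover have "(a x y)^2 * b x y \<le> (a x y)^2" using b01[of x y] by (simp add: mult_left_le)
    ultimately show "(a x y)^2 * b x y \<le> a x y" by linarith
  qed
  have nn: "0 \<le> EE p (a x)" "0 \<le> EE p (b x)" "0 \<le> EE ?M ?S" "0 \<le> EE ?M ?T"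
    "0 \<le> EE p (\<lambda>y. (a x y)^2)"
    by (auto intro!: EE_nonneg sum_nonneg simp: a01 b01)
  have st: "EE ?M (\<lambda>f. ?S f * ?T f) \<le> EE ?M ?S * EE ?M ?T + EE ?M ?S"
    by (rule momST[OF insert(1) assms(2) a01 b01])
  have m2: "EE (Pi_pmf (insert x A) d (\<lambda>_. p)) (\<lambda>f. (\<Sum>v\<in>insert x A. a v (f v))^2)
     = EE p (\<lambda>y. (a x y)^2) + 2 * EE p (a x) * EE ?M ?S + EE ?M (\<lambda>f. (?S f)^2)"
    using mom2[OF insert(1) assms(2), of d a] mom2[OF _ assms(2), of "insert x A" d a]
      mom1[OF insert(1) assms(2), of d a] mom1[OF _ assms(2), of "insert x A" d a] insert(1,2)
    by (simp add: power2_eq_square algebra_simps)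
  have p1: "EE p (\<lambda>y. a x y * b x y) * EE ?M ?S \<le> EE p (a x) * EE ?M ?S"
    using ab nn by (simp add: mult_right_mono)
  have p2: "EE p (a x) * EE ?M (\<lambda>f. ?S f * ?T f) \<le> EE p (a x) * (EE ?M ?S * EE ?M ?T + EE ?M ?S)"
    using st nn by (simp add: mult_left_mono)
  have ES: "EE (Pi_pmf (insert x A) d (\<lambda>_. p)) (\<lambda>f. \<Sum>v\<in>insert x A. a v (f v)) = EE p (a x) + EE ?M ?S"
    using mom1[OF insert(1) assms(2), of d a] mom1[OF _ assms(2), of "insert x A" d a] insert(1,2) by simp
  have ET: "EE (Pi_pmf (insert x A) d (\<lambda>_. p)) (\<lambda>f. \<Sum>v\<in>insert x A. b v (f v)) = EE p (b x) + EE ?M ?T"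
    using mom1[OF insert(1) assms(2), of d b] mom1[OF _ assms(2), of "insert x A" d b] insert(1,2) by simp
  have n2: "0 \<le> EE p (a x) * EE ?M ?S * EE p (b x)" using nn by simp
  have n1: "0 \<le> EE p (\<lambda>y. (a x y)^2) * EE p (b x)" using nn by simp
  show ?case
    unfolding eq m2 ES ET
    by (rule s2t_arith[OF a2b insert.IH p1 p2 n1 n2 nn(1)])
qed



lemma cheb:
  fixes c w :: "nat \<Rightarrow> real"
  assumes I: "finite I" and c0: "\<And>i. i \<in> I \<Longrightarrow> c i \<ge> 0" and w0: "\<And>i. i \<in> I \<Longrightarrow> w i \<ge> 0"
    and mono: "\<And>i j. i \<in> I \<Longrightarrow> j \<in> I \<Longrightarrow> (c i - c j) * (w i - w j) \<ge> 0"
  shows "(\<Sum>i\<in>I. (c i)^2) * (\<Sum>i\<in>I. c i * w i)^2 \<le> (\<Sum>i\<in>I. c i)^2 * (\<Sum>i\<in>I. (c i * w i)^2)"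
proof -
  define D where "D = (\<Sum>i\<in>I. c i)"
  define C2 where "C2 = (\<Sum>i\<in>I. (c i)^2)"
  define P where "P = (\<Sum>i\<in>I. (c i)^2 * w i)"
  define Q where "Q = (\<Sum>i\<in>I. c i * w i)"
  define M2 where "M2 = (\<Sum>i\<in>I. (c i * w i)^2)"
  have e: "(\<Sum>i\<in>I. \<Sum>j\<in>I. c i * c j * ((c i - c j) * (w i - w j))) = 2 * (D * P - C2 * Q)"
  proof -
    have "(\<Sum>i\<in>I. \<Sum>j\<in>I. c i * c j * ((c i - c j) * (w i - w j))) =
       (\<Sum>i\<in>I. \<Sum>j\<in>I. ((c i)^2 * w i * c j - (c i)^2 * (c j * w j)) + (c j ^2 * w j * c i - c j^2 * (c i * w i)))"
      by (intro sum.cong refl) (simp add: algebra_simps power2_eq_square)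
    also have "\<dots> = (\<Sum>i\<in>I. \<Sum>j\<in>I. (c i)^2 * w i * c j - (c i)^2 * (c j * w j)) + (\<Sum>i\<in>I. \<Sum>j\<in>I. c j ^2 * w j * c i - c j^2 * (c i * w i))"
      by (simp add: sum.distrib)
    also have "(\<Sum>i\<in>I. \<Sum>j\<in>I. c j ^2 * w j * c i - c j^2 * (c i * w i)) = (\<Sum>i\<in>I. \<Sum>j\<in>I. (c i)^2 * w i * c j - (c i)^2 * (c j * w j))"
    proof -
      have s1: "(\<Sum>i\<in>I. \<Sum>j\<in>I. c j ^2 * w j * c i) = (\<Sum>i\<in>I. \<Sum>j\<in>I. (c i)^2 * w i * c j)"
        by (rule sum.swap)
      have s2: "(\<Sum>i\<in>I. \<Sum>j\<in>I. c j ^2 * (c i * w i)) = (\<Sum>i\<in>I. \<Sum>j\<in>I. (c i)^2 * (c j * w j))"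
        by (rule sum.swap)
      show ?thesis by (simp only: sum_subtractf s1 s2)
    qed
    also have "(\<Sum>i\<in>I. \<Sum>j\<in>I. (c i)^2 * w i * c j - (c i)^2 * (c j * w j)) = P * D - C2 * Q"
      by (simp only: P_def D_def C2_def Q_def sum_subtractf sum_product)
    finally show ?thesis by (simp add: algebra_simps)
  qed
  have "0 \<le> (\<Sum>i\<in>I. \<Sum>j\<in>I. c i * c j * ((c i - c j) * (w i - w j)))"
    by (intro sum_nonneg; rule mult_nonneg_nonneg; simp add: c0 mono)
  then have PQ: "C2 * Q \<le> D * P" using e by simp
  have cs: "P^2 \<le> C2 * M2"
    using Cauchy_Schwarz_ineq_sum[of c "\<lambda>i. c i * w i" I]
    by (simp add: P_def C2_def M2_def power2_eq_square mult.assoc)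
  have nn: "0 \<le> C2" "0 \<le> Q" "0 \<le> D" "0 \<le> M2"
    unfolding C2_def Q_def D_def M2_def using c0 w0 by (auto intro!: sum_nonneg)
  have "(C2 * Q)^2 \<le> (D * P)^2" using PQ nn by (intro power_mono) auto
  also have "\<dots> = D^2 * P^2" by (simp add: power_mult_distrib)
  also have "\<dots> \<le> D^2 * (C2 * M2)" using cs by (intro mult_left_mono) auto
  finally have h: "C2 * (C2 * Q^2) \<le> C2 * (D^2 * M2)" by (simp add: power2_eq_square algebra_simps)
  show ?thesis
  proof (cases "C2 = 0")
    case True then show ?thesis using nn by (simp add: C2_def D_def M2_def Q_def)
  next
    case False
    then have "C2 > 0" using nn by simp
    then have "C2 * Q^2 \<le> D^2 * M2" using h by simp
    then show ?thesis by (simp add: C2_def D_def M2_def Q_def)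
  qed
qed



lemma num_final:
  fixes n be ga u s vt m2 :: real
  assumes n: "n > 0" and b1: "be \<ge> 1/2 - 1/1000" and ps: "be * (2*be - 1) - ga \<le> 1/1000"
    and g0: "0 \<le> ga" and g1: "ga \<le> 1/1000" and gn: "be / n \<le> ga"
    and u: "u = 1 - be" and s: "s = ga + 2*u*be" and vt: "vt \<ge> u * (be^2 + be - 2*ga)"
    and m2: "0 \<le> m2" "m2 \<le> 4*ga"
  shows "vt/(n* s^2) - 2/(n^2* s^2) - 4*m2/(n* s^3) \<ge> 1/(12*n)"
proof -
  have b2: "be \<le> 502/1000"
  proof (rule ccontr)
    assume "\<not> ?thesis"
    then have "be > 502/1000" by simp
    then have "be * (2*be - 1) > 502/1000 * (4/1000)" by (intro mult_strict_mono) auto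
    then show False using ps g1 by simp
  qed
  have sq: "2*u*be = 1/2 - 2*(be-1/2)^2" by (simp add: u power2_eq_square algebra_simps)
  have "\<bar>be - 1/2\<bar> \<le> 1/100" unfolding abs_le_iff using b1 b2 by linarith
  then have "\<bar>be - 1/2\<bar>^2 \<le> (1/100)^2" by (intro power_mono) auto
  then have sq2: "(be-1/2)^2 \<le> 1/10000" by (simp add: power_divide)
  have sq3: "(be-1/2)^2 \<ge> 0" by simp
  have s1: "s \<ge> 49/100" using s sq sq2 g0 by linarith
  have s2: "s \<le> 51/100" using s sq sq3 g1 by linarith
  have num: "u * (be^2 + be - 2*ga) - 2*ga/be \<ge> 3/10"
  proof -
    have "be^2 \<ge> (499/1000)^2" using b1 by (intro power_mono) auto
    then have "be^2 + be - 2*ga \<ge> 7/10" using b1 g1 by (simp add: power_divide)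
    moreover have "u \<ge> 49/100" using u b2 by simp
    ultimately have "u * (be^2 + be - 2*ga) \<ge> 49/100 * (7/10)"
      by (intro mult_mono) auto
    moreover have "2*ga/be \<le> 1/100" using g1 b1 by (simp add: divide_simps)
    ultimately show ?thesis by simp
  qed
  have n1: "1/n \<le> ga/be" using gn n b1 by (simp add: divide_simps mult.commute)
  have "2/(n^2* s^2) = (1/n) * (2/(n* s^2))" by (simp add: power2_eq_square)
  also have "\<dots> \<le> (ga/be) * (2/(n* s^2))" using n1 n s1 by (intro mult_right_mono) auto
  finally have t2: "2/(n^2* s^2) \<le> (2*ga/be)/(n* s^2)" by (simp add: mult.commute)
  have t1: "vt/(n* s^2) - (2*ga/be)/(n* s^2) = (vt - 2*ga/be)/(n* s^2)" by (simp add: diff_divide_distrib)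
  have "(vt - 2*ga/be)/(n* s^2) \<ge> (3/10)/(n* s^2)" using num vt n s1
    by (intro divide_right_mono) auto
  moreover have "(3/10)/(n* s^2) \<ge> (3/10)/(n*(51/100)^2)" using n s1 s2
    by (intro divide_left_mono mult_left_mono power_mono) auto
  moreover have "4*m2/(n* s^3) \<le> (4/250)/(n*(49/100)^3)" using n s1 m2 g1
    by (intro frac_le mult_left_mono power_mono) auto
  ultimately have "vt/(n* s^2) - 2/(n^2* s^2) - 4*m2/(n* s^3) \<ge> (3/10)/(n*(51/100)^2) - (4/250)/(n*(49/100)^3)"
    using t1 t2 by linarith
  moreover have "(3/10)/(n*(51/100)^2) - (4/250)/(n*(49/100)^3) \<ge> 1/(12*n)"
    using n by (simp add: divide_simps)
  ultimately show ?thesis by linarith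
qed




lemma card_filter_sum:
  assumes "finite V"
  shows "real (card {u\<in>V. P u}) = (\<Sum>u\<in>V. if P u then 1 else 0)"
proof -
  have "real (card {u\<in>V. P u}) = (\<Sum>u\<in>{u\<in>V. P u}. 1)" by simp
  also have "\<dots> = (\<Sum>u\<in>V. if P u then 1 else 0)" using assms by (rule sum.inter_filter)
  finally show ?thesis .
qed

lemma sum_if_const:
  assumes "finite V"
  shows "(\<Sum>u\<in>V. if P u then K else 0) = real (card {u\<in>V. P u}) * (K::real)"
proof -
  have "(\<Sum>u\<in>V. if P u then K else 0) = (\<Sum>u\<in>V. (if P u then 1 else 0) * K)" by (intro sum.cong) auto
  also have "\<dots> = (\<Sum>u\<in>V. if P u then 1 else 0) * K" by (simp add: sum_distrib_right)
  finally show ?thesis using card_filter_sum[OF assms, of P] by simp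
qed

lemma sum_ind:
  fixes z :: "nat option" and k :: nat
  shows "(\<Sum>i\<in>{1..k}. if z = Some i then (1::real) else 0) = (if \<exists>j\<in>{1..k}. z = Some j then 1 else 0)"
proof (cases z)
  case None then show ?thesis by simp
next
  case (Some j)
  then have "(\<Sum>i\<in>{1..k}. if z = Some i then (1::real) else 0) = (\<Sum>i\<in>{1..k}. if j = i then 1 else 0)"
    by (intro sum.cong) auto
  also have "\<dots> = (if j \<in> {1..k} then 1 else 0)" by simp
  finally show ?thesis using Some by auto
qed

lemma usd_values: "usd_update x y = None \<or> usd_update x y = x \<or> (x = None \<and> usd_update x y = y)"
  by (cases x; cases y) auto

lemma e_sum:
  fixes opn :: "nat \<Rightarrow> nat option"
  assumes "finite V"
  shows "(\<Sum>y\<in>V. if usd_update (opn v) (opn y) = Some i then 1 else 0) =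
    (if opn v = Some i then real (card {u\<in>V. opn u = None}) + real (card {u\<in>V. opn u = Some i})
     else if opn v = None then real (card {u\<in>V. opn u = Some i}) else (0::real))"
proof (cases "opn v")
  case None
  then show ?thesis using card_filter_sum[OF assms, of "\<lambda>u. opn u = Some i"] by simp
next
  case (Some j)
  show ?thesis
  proof (cases "j = i")
    case True
    have "(\<Sum>y\<in>V. if usd_update (opn v) (opn y) = Some i then 1 else (0::real)) =
       (\<Sum>y\<in>V. (if opn y = None then 1 else 0) + (if opn y = Some i then 1 else 0))"
      using Some True by (intro sum.cong refl) (cases "opn y"; auto)
    also have "\<dots> = real (card {u\<in>V. opn u = None}) + real (card {u\<in>V. opn u = Some i})"
      by (simp add: sum.distrib card_filter_sum[OF assms])
    finally show ?thesis using Some True by simp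
  next
    case False
    have "(\<Sum>y\<in>V. if usd_update (opn v) (opn y) = Some i then 1 else (0::real)) = 0"
    proof (intro sum.neutral ballI)
      fix y
      have "usd_update (Some j) z \<noteq> Some i" for z using False by (cases z) auto
      then show "(if usd_update (opn v) (opn y) = Some i then 1 else (0::real)) = 0" using Some by simp
    qed
    then show ?thesis using Some False by simp
  qed
qed



lemma main_bound:
  fixes k :: nat and V :: "nat set" and opn :: "nat \<Rightarrow> nat option"
  assumes finV: "finite V" and valid: "valid_config k V opn"
    and hb: "beta k V opn \<ge> 1/2 - 1/1000" and hpsi: "psi k V opn \<le> 1/1000" and hg: "gamma k V opn \<le> 1/1000"
  shows "EE (gossip_step V opn) (gamma_tilde k V) \<ge> gamma_tilde k V opn + 1/(12 * real (card V))"
proof -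
  define n where "n = real (card V)"
  have npos: "n > 0"
  proof (rule ccontr)
    assume "\<not> n > 0" then have "card V = 0" by (simp add: n_def)
    then have "beta k V opn = 0" by (simp add: beta_def alpha_def)
    then show False using hb by simp
  qed
  have Vne: "V \<noteq> {}" using npos n_def by auto
  define cnt where "cnt i = real (card {u\<in>V. opn u = Some i})" for i
  define Ud where "Ud = real (card {u\<in>V. opn u = None})"
  define D where "D = (\<Sum>i\<in>{1..k}. cnt i)"
  define C2 where "C2 = (\<Sum>i\<in>{1..k}. (cnt i)^2)"
  have alpha_eq: "alpha V opn i = cnt i / n" for i by (simp add: alpha_def cnt_def n_def)
  have beta_eq: "beta k V opn = D / n" by (simp add: beta_def alpha_eq D_def sum_divide_distrib)
  have gamma_eq: "gamma k V opn = C2 / n^2"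
    by (simp add: gamma_def alpha_eq C2_def sum_divide_distrib power_divide)
  have cnt0: "cnt i \<ge> 0" for i by (simp add: cnt_def)
  have Un0: "Ud \<ge> 0" by (simp add: Ud_def)
  have DU: "D + Ud = n"
  proof -
    have "D = (\<Sum>i\<in>{1..k}. \<Sum>u\<in>V. if opn u = Some i then 1 else 0)"
      by (simp add: D_def cnt_def card_filter_sum[OF finV])
    also have "\<dots> = (\<Sum>u\<in>V. \<Sum>i\<in>{1..k}. if opn u = Some i then 1 else 0)" by (rule sum.swap)
    also have "\<dots> = (\<Sum>u\<in>V. if \<exists>j\<in>{1..k}. opn u = Some j then 1 else 0)" by (simp only: sum_ind)
    finally have "D + Ud = (\<Sum>u\<in>V. (if \<exists>j\<in>{1..k}. opn u = Some j then 1 else 0) + (if opn u = None then 1 else 0))"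
      by (simp add: Ud_def card_filter_sum[OF finV] sum.distrib)
    also have "\<dots> = (\<Sum>u\<in>V. 1)" using valid unfolding valid_config_def by (intro sum.cong) auto
    finally show ?thesis by (simp add: n_def)
  qed
  have cntD: "cnt i \<le> D" if "i \<in> {1..k}" for i
    unfolding D_def using that cnt0 by (intro member_le_sum) auto
  have Dpos: "D > 0"
  proof -
    have "D / n > 0" using hb unfolding beta_eq by linarith
    then show ?thesis using npos by (simp add: zero_less_divide_iff)
  qed
  have C2D: "D \<le> C2"
    unfolding D_def C2_def
  proof (rule sum_mono)
    fix i
    have "card {u\<in>V. opn u = Some i} \<le> card {u\<in>V. opn u = Some i} ^ 2" by (simp add: power2_eq_square le_square)
    then show "cnt i \<le> (cnt i)^2" unfolding cnt_def by (metis of_nat_le_iff of_nat_power)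
  qed
  define p where "p = pmf_of_set V"
  have fp: "finite (set_pmf p)" using finV Vne by (simp add: p_def)
  define M where "M = Pi_pmf V (0::nat) (\<lambda>_. p)"
  have fM: "finite (set_pmf M)" unfolding M_def by (rule fin_Pi[OF finV fp])
  define a where "a i v y = (if usd_update (opn v) (opn y) = Some i then 1 else (0::real))" for i v y
  define b where "b v y = (\<Sum>i\<in>{1..k}. a i v y)" for v y
  define X where "X = (\<lambda>i f. \<Sum>v\<in>V. a i v (f v))"
  define Y where "Y = (\<lambda>f. \<Sum>i\<in>{1..k}. X i f)"
  define A where "A = (\<lambda>f. \<Sum>i\<in>{1..k}. (X i f)^2)"
  define G where "G = (\<lambda>(f::nat \<Rightarrow> nat) u. if u \<in> V then usd_update (opn u) (opn (f u)) else opn u)"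
  have gs: "gossip_step V opn = map_pmf G M" by (simp add: gossip_step_def G_def M_def p_def)
  have a01: "0 \<le> a i v y \<and> a i v y \<le> 1" for i v y by (simp add: a_def)
  have b01: "0 \<le> b v y \<and> b v y \<le> 1" for v y unfolding b_def a_def sum_ind by simp
  have X0: "X i f \<ge> 0" for i f by (simp add: X_def a_def sum_nonneg)
  have Yalt: "Y = (\<lambda>f. \<Sum>v\<in>V. b v (f v))"
    unfolding Y_def X_def b_def by (rule ext, rule sum.swap)
  have cardG: "real (card {u\<in>V. G f u = Some i}) = X i f" for f i
    unfolding card_filter_sum[OF finV] X_def a_def G_def by (intro sum.cong) auto
  have alphaG: "alpha V (G f) i = X i f / n" for f i by (simp add: alpha_def cardG n_def)
  have betaG: "beta k V (G f) = Y f / n" for f by (simp add: beta_def alphaG Y_def sum_divide_distrib)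
  have gammaG: "gamma k V (G f) = A f / n^2" for f
    by (simp add: gamma_def alphaG A_def sum_divide_distrib power_divide)
  have gtG: "gamma_tilde k V (G f) = (if Y f > 0 then A f / (Y f)^2 else 0)" for f
    using npos by (simp add: gamma_tilde_def betaG gammaG zero_less_divide_iff power_divide)
  have Ea: "EE p (a i v) = (if opn v = Some i then (Ud + cnt i)/n else if opn v = None then cnt i / n else 0)" for i v
    unfolding p_def integral_pmf_of_set[OF Vne finV] a_def e_sum[OF finV]
    by (simp add: Ud_def cnt_def n_def)
  have gsum: "(\<Sum>v\<in>V. h (EE p (a i v))) = cnt i * h ((Ud + cnt i)/n) + Ud * h (cnt i / n)"
    if h0: "h 0 = 0" for h :: "real \<Rightarrow> real" and i
  proof -
    have "(\<Sum>v\<in>V. h (EE p (a i v))) = (\<Sum>v\<in>V. (if opn v = Some i then h ((Ud + cnt i)/n) else 0) + (if opn v = None then h (cnt i / n) else 0))"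
      by (intro sum.cong refl) (simp add: Ea h0)
    also have "\<dots> = cnt i * h ((Ud + cnt i)/n) + Ud * h (cnt i / n)"
      by (simp add: sum.distrib sum_if_const[OF finV] cnt_def Ud_def)
    finally show ?thesis .
  qed
  define m where "m i = cnt i * ((Ud + cnt i)/n) + Ud * (cnt i / n)" for i
  define vt where "vt i = cnt i * ((Ud + cnt i)/n - ((Ud + cnt i)/n)^2) + Ud * (cnt i/n - (cnt i/n)^2)" for i
  have EX: "EE M (X i) = m i" for i
  proof -
    have "EE M (X i) = (\<Sum>v\<in>V. EE p (a i v))"
      unfolding X_def M_def by (rule mom1[OF finV fp])
    also have "\<dots> = m i" using gsum[of "\<lambda>x. x" i] by (simp add: m_def)
    finally show ?thesis .
  qed
  have EX2: "EE M (\<lambda>f. (X i f)^2) = (m i)^2 + vt i" for i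
  proof -
    have sq: "EE p (\<lambda>y. (a i v y)^2) = EE p (a i v)" for v
      by (rule Bochner_Integration.integral_cong) (auto simp: a_def)
    have "EE M (\<lambda>f. (X i f)^2) = (EE M (X i))^2 + (\<Sum>v\<in>V. EE p (\<lambda>y. (a i v y)^2) - (EE p (a i v))^2)"
      unfolding X_def M_def by (rule mom2[OF finV fp])
    also have "(\<Sum>v\<in>V. EE p (\<lambda>y. (a i v y)^2) - (EE p (a i v))^2) = (\<Sum>v\<in>V. (\<lambda>x. x - x^2) (EE p (a i v)))"
      by (simp add: sq)
    also have "\<dots> = vt i" by (subst gsum) (simp_all add: vt_def)
    finally show ?thesis by (simp add: EX)
  qed
  define c where "c = (\<Sum>i\<in>{1..k}. m i)"
  define M2 where "M2 = (\<Sum>i\<in>{1..k}. (m i)^2)"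
  define Vt where "Vt = (\<Sum>i\<in>{1..k}. vt i)"
  have intM: "integrable M f" for f :: "_ \<Rightarrow> real" by (rule integrable_measure_pmf_finite[OF fM])
  have EY: "EE M Y = c"
    unfolding Y_def c_def by (subst Bochner_Integration.integral_sum) (auto simp: intM EX)
  have EA: "EE M A = M2 + Vt"
    unfolding A_def M2_def Vt_def by (subst Bochner_Integration.integral_sum) (auto simp: intM EX2 sum.distrib)
  have EAYi: "EE M (\<lambda>f. (X i f)^2 * Y f) \<le> ((m i)^2 + vt i) * c + m i + 2 * (m i)^2" for i
  proof -
    have "EE M (\<lambda>f. (X i f)^2 * Y f) \<le> EE M (\<lambda>f. (X i f)^2) * EE M Y + EE M (X i) + 2 * (EE M (X i))^2"
      unfolding Yalt X_def M_def by (rule momS2T[OF finV fp a01 b01])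
    then show ?thesis by (simp add: EX EX2 EY)
  qed
  have EAY: "EE M (\<lambda>f. A f * Y f) \<le> (M2 + Vt) * c + c + 2 * M2"
  proof -
    have "EE M (\<lambda>f. A f * Y f) = (\<Sum>i\<in>{1..k}. EE M (\<lambda>f. (X i f)^2 * Y f))"
      unfolding A_def sum_distrib_right by (subst Bochner_Integration.integral_sum) (auto simp: intM)
    also have "\<dots> \<le> (\<Sum>i\<in>{1..k}. ((m i)^2 + vt i) * c + m i + 2 * (m i)^2)"
      by (rule sum_mono) (rule EAYi)
    also have "\<dots> = (\<Sum>i\<in>{1..k}. ((m i)^2 + vt i) * c) + (\<Sum>i\<in>{1..k}. m i) + (\<Sum>i\<in>{1..k}. 2 * (m i)^2)"
      by (simp add: sum.distrib)
    also have "\<dots> = (M2 + Vt) * c + c + 2 * M2"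
      by (simp only: sum_distrib_right[symmetric] sum_distrib_left[symmetric] sum.distrib M2_def Vt_def c_def[symmetric])
    finally show ?thesis .
  qed
  have m_eq: "m i = ((cnt i)^2 + 2 * Ud * cnt i) / n" for i
    using npos by (simp add: m_def field_simps power2_eq_square)
  have m_eq2: "m i = cnt i * ((2 * Ud + cnt i) / n)" for i
    using npos by (simp add: m_def field_simps power2_eq_square)
  have c_eq: "c = (C2 + 2 * Ud * D) / n"
  proof -
    have "c = (\<Sum>i\<in>{1..k}. (cnt i)^2 + 2 * Ud * cnt i) / n"
      by (simp add: c_def m_eq sum_divide_distrib)
    also have "\<dots> = (C2 + 2 * Ud * D) / n"
      by (simp add: sum.distrib sum_distrib_left C2_def D_def)
    finally show ?thesis .
  qed
  have cpos: "c > 0"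
  proof -
    have "C2 + 2 * Ud * D > 0" using C2D Dpos Un0 by (simp add: add_pos_nonneg)
    then show ?thesis using c_eq npos by simp
  qed
  have m0: "m i \<ge> 0" for i using npos cnt0 Un0 by (simp add: m_def)
  have M2le: "M2 \<le> 4 * C2"
    unfolding M2_def C2_def sum_distrib_left
  proof (rule sum_mono)
    fix i assume i: "i \<in> {1..k}"
    have "2 * Ud + cnt i \<le> 2 * n" using cntD[OF i] DU cnt0[of i] Un0 Dpos by linarith
    then have "(2 * Ud + cnt i) / n \<le> 2" using npos by (simp add: divide_simps)
    then have "m i \<le> cnt i * 2" unfolding m_eq2 using cnt0 by (intro mult_left_mono) auto
    then have "(m i)^2 \<le> (cnt i * 2)^2" using m0 by (intro power_mono) auto
    then show "(m i)^2 \<le> 4 * (cnt i)^2" by (simp add: power_mult_distrib)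
  qed
  have M20: "M2 \<ge> 0" unfolding M2_def by (simp add: sum_nonneg)
  have vti: "vt i * n^2 \<ge> Ud * (cnt i * D + n * cnt i - 2 * (cnt i)^2)" if i: "i \<in> {1..k}" for i
  proof -
    have e1: "vt i * n^2 = cnt i * ((Ud + cnt i) * n - (Ud + cnt i)^2) + Ud * (cnt i * n - (cnt i)^2)"
      using npos by (simp add: vt_def field_simps power2_eq_square)
    have e2: "(Ud + cnt i) * n - (Ud + cnt i)^2 = (Ud + cnt i) * (D - cnt i)"
      using DU by (simp add: power2_eq_square algebra_simps flip: DU)
    have "cnt i * (D - cnt i) \<ge> 0" using cntD[OF i] cnt0 by simp
    then have h0: "cnt i * (cnt i * (D - cnt i)) \<ge> 0" using cnt0[of i] by simp
    have "cnt i * ((Ud + cnt i) * (D - cnt i)) = cnt i * (Ud * (D - cnt i)) + cnt i * (cnt i * (D - cnt i))"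
      by (simp add: algebra_simps)
    then have "cnt i * ((Ud + cnt i) * (D - cnt i)) \<ge> cnt i * (Ud * (D - cnt i))"
      using h0 by linarith
    then show ?thesis unfolding e1 e2 by (simp add: algebra_simps power2_eq_square)
  qed
  have Vtn: "Vt * n^2 \<ge> Ud * (D^2 + n * D - 2 * C2)"
  proof -
    have "Vt * n^2 = (\<Sum>i\<in>{1..k}. vt i * n^2)" by (simp add: Vt_def sum_distrib_right)
    also have "\<dots> \<ge> (\<Sum>i\<in>{1..k}. Ud * (cnt i * D + n * cnt i - 2 * (cnt i)^2))"
      by (rule sum_mono) (rule vti)
    also have "(\<Sum>i\<in>{1..k}. Ud * (cnt i * D + n * cnt i - 2 * (cnt i)^2)) = Ud * (D^2 + n * D - 2 * C2)"
      by (simp add: sum_distrib_left sum_subtractf sum.distrib sum_distrib_right[symmetric] D_def C2_def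
          power2_eq_square algebra_simps)
    finally show ?thesis .
  qed
  have chebi: "C2 * c^2 \<le> D^2 * M2"
  proof -
    have "(\<Sum>i\<in>{1..k}. (cnt i)^2) * (\<Sum>i\<in>{1..k}. cnt i * ((2 * Ud + cnt i) / n))^2
      \<le> (\<Sum>i\<in>{1..k}. cnt i)^2 * (\<Sum>i\<in>{1..k}. (cnt i * ((2 * Ud + cnt i) / n))^2)"
    proof (rule cheb)
      fix i j
      have "(cnt i - cnt j) * ((2 * Ud + cnt i) / n - (2 * Ud + cnt j) / n) = (cnt i - cnt j)^2 / n"
        by (simp add: power2_eq_square diff_divide_distrib[symmetric])
      then show "0 \<le> (cnt i - cnt j) * ((2 * Ud + cnt i) / n - (2 * Ud + cnt j) / n)"
        using npos by simp
    qed (use cnt0 Un0 npos in auto)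
    then show ?thesis by (simp add: C2_def D_def M2_def c_def m_eq2)
  qed
  have pw: "gamma_tilde k V (G f) \<ge> 3 / c^2 * A f - 2 / c^3 * (A f * Y f)" for f
  proof (cases "Y f > 0")
    case False
    have Y0: "Y f = 0" using False X0 unfolding Y_def by (meson not_less order.antisym sum_nonneg)
    then have "\<forall>i\<in>{1..k}. X i f = 0" unfolding Y_def using X0 by (simp add: sum_nonneg_eq_0_iff)
    then have "A f = 0" unfolding A_def by simp
    then show ?thesis using gtG[of f] False by simp
  next
    case True
    let ?y = "Y f"
    have A0: "A f \<ge> 0" unfolding A_def by (simp add: sum_nonneg)
    have key: "c^3 - 3 * c * ?y^2 + 2 * ?y^3 \<ge> 0"
    proof -
      have "c^3 - 3 * c * ?y^2 + 2 * ?y^3 = (c - ?y)^2 * (c + 2 * ?y)"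
        by (simp add: power2_eq_square power3_eq_cube algebra_simps)
      also have "\<dots> \<ge> 0" using cpos True by simp
      finally show ?thesis .
    qed
    have "A f / ?y^2 - (3 / c^2 * A f - 2 / c^3 * (A f * ?y)) = A f * (c^3 - 3 * c * ?y^2 + 2 * ?y^3) / (?y^2 * c^3)"
      using cpos True by (simp add: field_simps power2_eq_square power3_eq_cube)
    also have "\<dots> \<ge> 0" using A0 key cpos True by simp
    finally show ?thesis using gtG[of f] True by simp
  qed
  have lb: "EE (gossip_step V opn) (gamma_tilde k V) \<ge> (M2 + Vt) / c^2 - 2 / c^2 - 4 * M2 / c^3"
  proof -
    have "EE (gossip_step V opn) (gamma_tilde k V) = EE M (\<lambda>f. gamma_tilde k V (G f))"
      by (simp add: gs)
    also have "\<dots> \<ge> EE M (\<lambda>f. 3 / c^2 * A f - 2 / c^3 * (A f * Y f))"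
      by (rule EE_mono[OF fM]) (rule pw)
    also have "EE M (\<lambda>f. 3 / c^2 * A f - 2 / c^3 * (A f * Y f)) = 3 / c^2 * EE M A - 2 / c^3 * EE M (\<lambda>f. A f * Y f)"
      by (simp add: Bochner_Integration.integral_diff intM)
    also have "\<dots> \<ge> 3 / c^2 * (M2 + Vt) - 2 / c^3 * ((M2 + Vt) * c + c + 2 * M2)"
    proof -
      have "2 / c^3 * EE M (\<lambda>f. A f * Y f) \<le> 2 / c^3 * ((M2 + Vt) * c + c + 2 * M2)"
        by (rule mult_left_mono[OF EAY]) (use cpos in simp)
      then show ?thesis unfolding EA by linarith
    qed
    also have "3 / c^2 * (M2 + Vt) - 2 / c^3 * ((M2 + Vt) * c + c + 2 * M2) = (M2 + Vt) / c^2 - 2 / c^2 - 4 * M2 / c^3"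
      using cpos by (simp add: field_simps power2_eq_square power3_eq_cube)
    finally show ?thesis .
  qed
  have nf: "Vt / n / (n * (c / n)^2) - 2 / (n^2 * (c / n)^2) - 4 * (M2 / n^2) / (n * (c / n)^3) \<ge> 1 / (12 * n)"
  proof (rule num_final[OF npos, where u="Ud / n"])
    show "D / n \<ge> 1/2 - 1/1000" using hb beta_eq by simp
    show "D / n * (2 * (D / n) - 1) - C2 / n^2 \<le> 1/1000" using hpsi by (simp add: psi_def beta_eq gamma_eq)
    show "0 \<le> C2 / n^2" unfolding C2_def by (simp add: sum_nonneg)
    show "C2 / n^2 \<le> 1/1000" using hg gamma_eq by simp
    show "D / n / n \<le> C2 / n^2" using C2D npos by (simp add: power2_eq_square divide_right_mono)
    show "Ud / n = 1 - D / n" using DU npos by (simp add: field_simps)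
    show "c / n = C2 / n^2 + 2 * (Ud / n) * (D / n)" using c_eq npos by (simp add: field_simps power2_eq_square)
    have "Vt / n = (Vt * n^2) / n^3" using npos by (simp add: power2_eq_square power3_eq_cube)
    also have "\<dots> \<ge> (Ud * (D^2 + n * D - 2 * C2)) / n^3" using Vtn npos by (intro divide_right_mono) auto
    also have "(Ud * (D^2 + n * D - 2 * C2)) / n^3 = Ud / n * ((D / n)^2 + D / n - 2 * (C2 / n^2))"
      using npos by (simp add: field_simps power2_eq_square power3_eq_cube)
    finally show "Vt / n \<ge> Ud / n * ((D / n)^2 + D / n - 2 * (C2 / n^2))" .
    show "0 \<le> M2 / n^2" using M20 by simp
    show "M2 / n^2 \<le> 4 * (C2 / n^2)" using M2le npos by (simp add: divide_right_mono)
  qed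
  have nf2: "Vt / n / (n * (c / n)^2) - 2 / (n^2 * (c / n)^2) - 4 * (M2 / n^2) / (n * (c / n)^3)
      = Vt / c^2 - 2 / c^2 - 4 * M2 / c^3"
    using npos cpos by (simp add: field_simps power2_eq_square power3_eq_cube)
  have chebd: "C2 / D^2 \<le> M2 / c^2"
    using chebi Dpos cpos by (simp add: divide_simps mult.commute)
  have gt0: "gamma_tilde k V opn = C2 / D^2"
    using Dpos npos by (simp add: gamma_tilde_def beta_eq gamma_eq power_divide)
  have "(M2 + Vt) / c^2 - 2 / c^2 - 4 * M2 / c^3 = M2 / c^2 + (Vt / c^2 - 2 / c^2 - 4 * M2 / c^3)"
    by (simp add: add_divide_distrib)
  then show ?thesis using lb nf nf2 chebd gt0 by (simp add: n_def)
qed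


theorem mainTheorem9:
  shows "\<exists>\<epsilon>0::real. \<epsilon>0 > 0 \<and>
    (\<forall>(k::nat) (V::nat set) (opn::nat \<Rightarrow> nat option).
       finite V \<longrightarrow> valid_config k V opn \<longrightarrow>
       beta k V opn \<ge> 1/2 - \<epsilon>0 \<longrightarrow> psi k V opn \<le> \<epsilon>0 \<longrightarrow> gamma k V opn \<le> \<epsilon>0 \<longrightarrow>
       measure_pmf.expectation (gossip_step V opn) (gamma_tilde k V)
         \<ge> gamma_tilde k V opn + 1 / (12 * real (card V)))"
  apply (rule exI[of _ "1/1000"])
  apply (intro conjI allI impI)
   apply simp
  apply (rule main_bound; assumption)
  done

end
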